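(* Let $\mathbb{R}^{3,1}$ denote $\mathbb{R}^4$ with the inner product $\langle\langle X,Y\rangle\rangle = X_1Y_1+X_2Y_2+X_3Y_3-X_4Y_4$. Let $S\colon\mathbb{R}^2\to\mathbb{R}^{3,1}$ be a regular smooth net with an attached tangent isotropic hyperplane congruence $P$, and let $N(u,v)$ be a normal vector to $P(u,v)$ depending smoothly on $(u,v)$. Let $C\colon[0,1]\to S(\mathbb{R}^2)$, $C(t)=S(u(t),v(t))$, be a regular smooth curve such that the family of hyperplanes $t\mapsto P(u(t),v(t))$ (written as $\langle\langle X-C(t),N(u(t),v(t))\rangle\rangle=0$) is regular, and hence has an envelope. Then at each point $C(t)$, any tangent line to the surface $S(\mathbb{R}^2)$ that is contained in the characteristic plane $\Pi(t)$ of this envelope is L-conjugate to the tangent line of $C$ at $C(t)$ with respect to $P$.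
   Context: An isotropic hyperplane in $\mathbb{R}^{3,1}$ is a hyperplane $\{(x,x_4): x_4=\langle n,x\rangle+h\}$ with $n\in\mathbb{R}^3$ a Euclidean unit vector, $h\in\mathbb{R}$. A regular smooth net is a smooth map $S\colon\mathbb{R}^2\to\mathbb{R}^{3,1}$ with $S_u\not\parallel S_v$ everywhere; an attached tangent isotropic hyperplane congruence is a smooth map $(u,v)\mapsto P(u,v)$ to isotropic hyperplanes with $S(u,v)\in P(u,v)$ and $S_u,S_v$ parallel to $P(u,v)$. For a family of hyperplanes $P(t):\langle\langle X-S(t),N(t)\rangle\rangle=0$, $t\in[0,1]$, with $S,N$ smooth, the family is regular if $\dot N(t)\not\parallel N(t)$ for all $t$; then $\dot P(t)$ denotes the hyperplane $\langle\langle X-S(t),\dot N(t)\rangle\rangle-\langle\langle \dot S(t),N(t)\rangle\rangle=0$, the characteristic plane is $\Pi(t)=P(t)\cap\dot P(t)$, and the union of the $\Pi(t)$ is the envelope. L-conjugacy: define $L_P=\langle\langle S_{uu},N\rangle\rangle$, $M_P=\langle\langle S_{uv},N\rangle\rangle$, $N_P=\langle\langle S_{vv},N\rangle\rangle$ and $\mathrm{II}_{S,P}(A,B)=L_Pa_1b_1+M_P(a_1b_2+a_2b_1)+N_Pa_2b_2$ for $A=a_1S_u+a_2S_v$, $B=b_1S_u+b_2S_v$. Two non-parallel tangent vectors $T_1,T_2$ at $S(u,v)$ are L-conjugate with respect to $P$ if there is a diffeomorphism $D$ of $\mathbb{R}^2$ such that for $\bar S=S\circ D$, $\bar P=P\circ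 D$, at the corresponding parameter $\bar S_u\parallel T_1$, $\bar S_v\parallel T_2$ and $\bar S_u,\bar S_v,\bar S_{uv}$ are parallel to $\bar P$ (equivalently, $\mathrm{II}_{S,P}(T_1,T_2)=0$); a tangent vector $A$ is called L-conjugate to itself with respect to $P$ if $\mathrm{II}_{S,P}(A,A)=0$. Tangent lines are L-conjugate if their direction vectors are. *)

theory Defs
  imports "HOL-Analysis.Analysis"
begin

definition lip :: "real^4 \<Rightarrow> real^4 \<Rightarrow> real" where
  "lip X Y = X$1*Y$1 + X$2*Y$2 + X$3*Y$3 - X$4*Y$4"

fun Ck :: "nat \<Rightarrow> ('a::real_normed_vector \<Rightarrow> 'b::real_normed_vector) \<Rightarrow> bool" where
  "Ck 0 f = continuous_on UNIV f"
| "Ck (Suc k) f = (f differentiable_on UNIV \<and>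
      (\<forall>w. Ck k (\<lambda>x. frechet_derivative f (at x) w)))"

definition smooth :: "('a::real_normed_vector \<Rightarrow> 'b::real_normed_vector) \<Rightarrow> bool" where
  "smooth f = (\<forall>k. Ck k f)"

definition pd_u :: "(real^2 \<Rightarrow> 'b::real_normed_vector) \<Rightarrow> real^2 \<Rightarrow> 'b" where
  "pd_u f p = frechet_derivative f (at p) (axis 1 1)"

definition pd_v :: "(real^2 \<Rightarrow> 'b::real_normed_vector) \<Rightarrow> real^2 \<Rightarrow> 'b" where
  "pd_v f p = frechet_derivative f (at p) (axis 2 1)"

definition vparallel :: "'a::real_vector \<Rightarrow> 'a \<Rightarrow> bool" where
  "vparallel a b = (\<exists>c. a = c *\<^sub>R b \<or> b = c *\<^sub>R a)"

definition iso_hyp :: "real^3 \<Rightarrow> real \<Rightarrow> (real^4) set" where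
  "iso_hyp n h = {X. X$4 = n$1*X$1 + n$2*X$2 + n$3*X$3 + h}"

definition parallel_to :: "real^4 \<Rightarrow> (real^4) set \<Rightarrow> bool" where
  "parallel_to V H = (\<forall>Y\<in>H. Y + V \<in> H)"

definition regular_net :: "(real^2 \<Rightarrow> real^4) \<Rightarrow> bool" where
  "regular_net S = (smooth S \<and> (\<forall>p. \<not> vparallel (pd_u S p) (pd_v S p)))"

definition tangent_iso_congruence ::
    "(real^2 \<Rightarrow> real^4) \<Rightarrow> (real^2 \<Rightarrow> real^3) \<Rightarrow> (real^2 \<Rightarrow> real) \<Rightarrow> bool" where
  "tangent_iso_congruence S n h = (smooth n \<and> smooth h \<and>
     (\<forall>p. norm (n p) = 1 \<and> S p \<in> iso_hyp (n p) (h p) \<and>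
          parallel_to (pd_u S p) (iso_hyp (n p) (h p)) \<and>
          parallel_to (pd_v S p) (iso_hyp (n p) (h p))))"

definition normal_to :: "real^4 \<Rightarrow> (real^4) set \<Rightarrow> bool" where
  "normal_to N H = (N \<noteq> 0 \<and> (\<forall>X\<in>H. \<forall>Y\<in>H. lip (X - Y) N = 0))"

definition tcoords :: "(real^2 \<Rightarrow> real^4) \<Rightarrow> real^2 \<Rightarrow> real^4 \<Rightarrow> real \<times> real" where
  "tcoords S p A = (THE (a1, a2). A = a1 *\<^sub>R pd_u S p + a2 *\<^sub>R pd_v S p)"

definition II :: "(real^2 \<Rightarrow> real^4) \<Rightarrow> (real^2 \<Rightarrow> real^4) \<Rightarrow> real^2 \<Rightarrow> real^4 \<Rightarrow> real^4 \<Rightarrow> real" where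
  "II S N p A B =
    (let (a1, a2) = tcoords S p A; (b1, b2) = tcoords S p B;
         LP = lip (pd_u (pd_u S) p) (N p);
         MP = lip (pd_v (pd_u S) p) (N p);
         NP = lip (pd_v (pd_v S) p) (N p)
     in LP*a1*b1 + MP*(a1*b2 + a2*b1) + NP*a2*b2)"

text \<open>L-conjugacy of tangent directions (II-characterisation given in the paper);
  parallel directions (same tangent line) are L-conjugate iff the direction is
  L-conjugate to itself.\<close>
definition L_conjugate :: "(real^2 \<Rightarrow> real^4) \<Rightarrow> (real^2 \<Rightarrow> real^4) \<Rightarrow> real^2 \<Rightarrow> real^4 \<Rightarrow> real^4 \<Rightarrow> bool" where
  "L_conjugate S N p A B =
     (if vparallel A B then II S N p A A = 0 else II S N p A B = 0)"

text \<open>Characteristic plane Pi(t) = P(t) \<inter> P'(t) of the family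
  P(t): <<X - C(t), N(t)>> = 0.\<close>
definition char_plane :: "(real \<Rightarrow> real^4) \<Rightarrow> (real \<Rightarrow> real^4) \<Rightarrow> real \<Rightarrow> (real^4) set" where
  "char_plane C Nt t =
     {X. lip (X - C t) (Nt t) = 0} \<inter>
     {X. lip (X - C t) (vector_derivative Nt (at t)) - lip (vector_derivative C (at t)) (Nt t) = 0}"

end

theory Submission imports Defs begin

lemma lip_bilinear: "bounded_bilinear lip"
proof -
  have "bilinear lip"
    unfolding bilinear_def
    by (auto intro!: linearI simp: lip_def algebra_simps)
  then show ?thesis using bilinear_conv_bounded_bilinear by blast
qed

lemma lip_add_left: "lip (X + Y) Z = lip X Z + lip Y Z"
  and lip_scale_left: "lip (c *\<^sub>R X) Z = c * lip X Z"
  and lip_add_right: "lip Z (X + Y) = lip Z X + lip Z Y"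
  and lip_scale_right: "lip Z (c *\<^sub>R X) = c * lip Z X"
  and lip_diff_left: "lip (X - Y) Z = lip X Z - lip Y Z"
  by (auto simp: lip_def algebra_simps)

lemma chain_vd:
  assumes "g differentiable at t" "(F has_derivative F') (at (g t))"
  shows "vector_derivative (F \<circ> g) (at t) = F' (vector_derivative g (at t))"
proof -
  have "(g has_derivative (\<lambda>x. x *\<^sub>R vector_derivative g (at t))) (at t)"
    using assms(1) vector_derivative_works has_vector_derivative_def by blast
  from diff_chain_at[OF this assms(2)]
  have "((F \<circ> g) has_derivative (\<lambda>x. x *\<^sub>R F' (vector_derivative g (at t)))) (at t)"
    using linear_cmul[OF has_derivative_linear[OF assms(2)]]
    by (simp add: o_def)
  then show ?thesis
    by (simp add: has_vector_derivative_def vector_derivative_at)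
qed

lemma line_deriv:
  assumes "(f has_derivative F) (at (a + x *\<^sub>R e))"
  shows "((\<lambda>s. f (a + s *\<^sub>R e)) has_real_derivative F e) (at x)"
proof -
  have "((\<lambda>s. a + s *\<^sub>R e) has_derivative (\<lambda>s. s *\<^sub>R e)) (at x)"
    by (auto intro!: derivative_eq_intros)
  from diff_chain_at[OF this, of f F] assms
  have "((\<lambda>s. f (a + s *\<^sub>R e)) has_derivative (\<lambda>s. s *\<^sub>R F e)) (at x)"
    using linear_cmul[OF has_derivative_linear[OF assms]]
    by (simp add: o_def)
  moreover have "(\<lambda>s. s * F e) = (*) (F e)" by (auto simp: mult.commute)
  ultimately show ?thesis
    by (simp add: has_field_derivative_def)
qed

lemma vec2_decomp: "(d::real^2) = d$1 *\<^sub>R axis 1 1 + d$2 *\<^sub>R axis 2 1"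
  by (simp add: vec_eq_iff forall_2 axis_def)

lemma span2: assumes "T \<in> span {x, y}" shows "\<exists>a b. T = a *\<^sub>R x + b *\<^sub>R y"
  using assms by (smt (verit, ccfv_threshold) add_0 add_diff_cancel_left'
    diff_add_cancel set_zero set_zero singleton_iff span_breakdown_eq
    span_empty)

lemma mixed_mvt:
  fixes g k m :: "'a::real_normed_vector \<Rightarrow> real"
  assumes dg: "\<And>p. (g has_derivative G p) (at p)" and Ge: "\<And>p. G p e = k p"
    and dk: "\<And>p. (k has_derivative K p) (at p)" and Ke: "\<And>p. K p e' = m p"
    and h: "h > 0"
  shows "\<exists>\<xi> \<eta>. 0 < \<xi> \<and> \<xi> < h \<and> 0 < \<eta> \<and> \<eta> < h \<and>
     g (q + h *\<^sub>R e' + h *\<^sub>R e) - g (q + h *\<^sub>R e) - g (q + h *\<^sub>R e') + g q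
       = h * h * m (q + \<xi> *\<^sub>R e + \<eta> *\<^sub>R e')"
proof -
  define \<phi> where "\<phi> x = g (q + h *\<^sub>R e' + x *\<^sub>R e) - g (q + x *\<^sub>R e)" for x
  have d1: "(\<phi> has_real_derivative (k (q + h *\<^sub>R e' + x *\<^sub>R e) - k (q + x *\<^sub>R e))) (at x)" for x
    unfolding \<phi>_def
    using line_deriv[OF dg, where a="q + h *\<^sub>R e'" and x=x and e=e] line_deriv[OF dg, where a=q and x=x and e=e] Ge
    by (auto intro!: derivative_eq_intros)
  obtain \<xi> where
    xi: "0 < \<xi>" "\<xi> < h" and
    e1: "\<phi> h - \<phi> 0 = (h - 0) * (k (q + h *\<^sub>R e' + \<xi> *\<^sub>R e) - k (q + \<xi> *\<^sub>R e))"
    using MVT2[OF h, where f=\<phi> and f'="\<lambda>x. k (q + h *\<^sub>R e' + x *\<^sub>R e) - k (q + x *\<^sub>R e)"] d1 by blast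
  define \<psi> where "\<psi> y = k (q + \<xi> *\<^sub>R e + y *\<^sub>R e')" for y
  have d2: "(\<psi> has_real_derivative m (q + \<xi> *\<^sub>R e + y *\<^sub>R e')) (at y)" for y
    unfolding \<psi>_def
    using line_deriv[OF dk, where a="q + \<xi> *\<^sub>R e" and x=y and e=e'] Ke by auto
  obtain \<eta> where
    eta: "0 < \<eta>" "\<eta> < h" and
    e2: "\<psi> h - \<psi> 0 = (h - 0) * m (q + \<xi> *\<^sub>R e + \<eta> *\<^sub>R e')"
    using MVT2[OF h, where f=\<psi> and f'="\<lambda>y. m (q + \<xi> *\<^sub>R e + y *\<^sub>R e')"] d2 by blast
  have "q + h *\<^sub>R e' + \<xi> *\<^sub>R e = q + \<xi> *\<^sub>R e + h *\<^sub>R e'" by (simp add: algebra_simps)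
  then have "g (q + h *\<^sub>R e' + h *\<^sub>R e) - g (q + h *\<^sub>R e) - g (q + h *\<^sub>R e') + g q
       = h * h * m (q + \<xi> *\<^sub>R e + \<eta> *\<^sub>R e')"
    using e1 e2 unfolding \<phi>_def \<psi>_def by (simp add: algebra_simps)
  then show ?thesis using xi eta by blast
qed

lemma schwarz:
  fixes g gu gv guv gvu :: "real^2 \<Rightarrow> real"
  assumes dg: "\<And>p. (g has_derivative G p) (at p)"
    and Gu: "\<And>p. G p (axis 1 1) = gu p" and Gv: "\<And>p. G p (axis 2 1) = gv p"
    and du: "\<And>p. (gu has_derivative GU p) (at p)" and GUv: "\<And>p. GU p (axis 2 1) = guv p"
    and dv: "\<And>p. (gv has_derivative GV p) (at p)" and GVu: "\<And>p. GV p (axis 1 1) = gvu p"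
    and C1: "continuous_on UNIV guv" and C2: "continuous_on UNIV gvu"
  shows "guv q = gvu q"
proof (rule ccontr)
  assume ne: "guv q \<noteq> gvu q"
  define \<epsilon> where "\<epsilon> = \<bar>guv q - gvu q\<bar> / 2"
  have \<epsilon>: "\<epsilon> > 0" using ne by (simp add: \<epsilon>_def)
  obtain d1 where d1: "d1 > 0" "\<And>p. dist p q < d1 \<Longrightarrow> dist (guv p) (guv q) < \<epsilon>"
    using C1 \<epsilon> unfolding continuous_on_iff by blast
  obtain d2 where d2: "d2 > 0" "\<And>p. dist p q < d2 \<Longrightarrow> dist (gvu p) (gvu q) < \<epsilon>"
    using C2 \<epsilon> unfolding continuous_on_iff by blast
  define h where "h = min d1 d2 / 4"
  have h: "h > 0" using d1 d2 by (simp add: h_def)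
  define e1 :: "real^2" where "e1 = axis 1 1"
  define e2 :: "real^2" where "e2 = axis 2 1"
  have ne1: "norm e1 = 1" "norm e2 = 1" by (simp_all add: e1_def e2_def)
  obtain a b where ab: "0 < a" "a < h" "0 < b" "b < h" and
    E1: "g (q + h *\<^sub>R e2 + h *\<^sub>R e1) - g (q + h *\<^sub>R e1) - g (q + h *\<^sub>R e2) + g q
       = h * h * guv (q + a *\<^sub>R e1 + b *\<^sub>R e2)"
    using mixed_mvt[where g=g and G=G and e=e1 and k=gu and K=GU and e'=e2 and m=guv and h=h and q=q,
        OF dg _ du _ h] Gu GUv unfolding e1_def e2_def by blast
  obtain c d where cd: "0 < c" "c < h" "0 < d" "d < h" and
    E2: "g (q + h *\<^sub>R e1 + h *\<^sub>R e2) - g (q + h *\<^sub>R e2) - g (q + h *\<^sub>R e1) + g q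
       = h * h * gvu (q + c *\<^sub>R e2 + d *\<^sub>R e1)"
    using mixed_mvt[where g=g and G=G and e=e2 and k=gv and K=GV and e'=e1 and m=gvu and h=h and q=q,
        OF dg _ dv _ h] Gv GVu unfolding e1_def e2_def by blast
  have pe: "q + h *\<^sub>R e1 + h *\<^sub>R e2 = q + h *\<^sub>R e2 + h *\<^sub>R e1" by (simp add: algebra_simps)
  have E2': "g (q + h *\<^sub>R e2 + h *\<^sub>R e1) - g (q + h *\<^sub>R e2) - g (q + h *\<^sub>R e1) + g q
       = h * h * gvu (q + c *\<^sub>R e2 + d *\<^sub>R e1)" using E2 unfolding pe .
  have "h * h * guv (q + a *\<^sub>R e1 + b *\<^sub>R e2) = h * h * gvu (q + c *\<^sub>R e2 + d *\<^sub>R e1)"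
    using E1 E2' by linarith
  with h have eq: "guv (q + a *\<^sub>R e1 + b *\<^sub>R e2) = gvu (q + c *\<^sub>R e2 + d *\<^sub>R e1)"
    by simp
  have "dist (q + a *\<^sub>R e1 + b *\<^sub>R e2) q \<le> a + b"
    using norm_triangle_ineq[of "a *\<^sub>R e1" "b *\<^sub>R e2"] ab ne1 by (simp add: dist_norm)
  then have "dist (guv (q + a *\<^sub>R e1 + b *\<^sub>R e2)) (guv q) < \<epsilon>"
    using ab d1 by (intro d1) (simp add: h_def)
  moreover have "dist (q + c *\<^sub>R e2 + d *\<^sub>R e1) q \<le> c + d"
    using norm_triangle_ineq[of "c *\<^sub>R e2" "d *\<^sub>R e1"] cd ne1 by (simp add: dist_norm)
  then have "dist (gvu (q + c *\<^sub>R e2 + d *\<^sub>R e1)) (gvu q) < \<epsilon>"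
    using cd d2 by (intro d2) (simp add: h_def)
  moreover have "\<And>x y u v::real. \<bar>x - u\<bar> < \<bar>u - v\<bar>/2 \<Longrightarrow> \<bar>y - v\<bar> < \<bar>u - v\<bar>/2 \<Longrightarrow> x = y \<Longrightarrow> False"
    by (smt (verit) field_sum_of_halves)
  ultimately show False using eq unfolding \<epsilon>_def dist_real_def by blast
qed

lemma smooth_facts:
  assumes "smooth f"
  shows "\<And>p. f differentiable at p"
    and "\<And>w p. (\<lambda>x. frechet_derivative f (at x) w) differentiable at p"
    and "\<And>w w'. continuous_on UNIV (\<lambda>x. frechet_derivative (\<lambda>x. frechet_derivative f (at x) w) (at x) w')"
proof -
  have C: "Ck (Suc (Suc (Suc 0))) f" using assms unfolding smooth_def by blast
  show "\<And>p. f differentiable at p" using C by (simp add: differentiable_on_def)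
  show "\<And>w p. (\<lambda>x. frechet_derivative f (at x) w) differentiable at p"
    using C by (simp add: differentiable_on_def)
  show "\<And>w w'. continuous_on UNIV (\<lambda>x. frechet_derivative (\<lambda>x. frechet_derivative f (at x) w) (at x) w')"
    using C by (simp add: differentiable_imp_continuous_on)
qed

lemma fd: "F differentiable at p \<Longrightarrow> (F has_derivative frechet_derivative F (at p)) (at p)"
  using frechet_derivative_works by blast

lemma diff_lip_zero:
  assumes "A differentiable at p" "B differentiable at p" "\<And>p. lip (A p) (B p) = 0"
  shows "lip (A p) (frechet_derivative B (at p) d) + lip (frechet_derivative A (at p) d) (B p) = 0"
proof -
  have "((\<lambda>x. lip (A x) (B x)) has_derivative
      (\<lambda>h. lip (A p) (frechet_derivative B (at p) h) + lip (frechet_derivative A (at p) h) (B p))) (at p)"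
    by (rule bounded_bilinear.FDERIV[OF lip_bilinear fd[OF assms(1)] fd[OF assms(2)]])
  moreover have "(\<lambda>x. lip (A x) (B x)) = (\<lambda>x. 0)" using assms(3) by auto
  ultimately have "((\<lambda>x. 0::real) has_derivative
      (\<lambda>h. lip (A p) (frechet_derivative B (at p) h) + lip (frechet_derivative A (at p) h) (B p))) (at p)"
    by simp
  from has_derivative_unique[OF this has_derivative_const]
  show ?thesis by (metis)
qed

lemma lip_const_deriv:
  assumes "F differentiable at p"
  shows "((\<lambda>x. lip (F x) c) has_derivative (\<lambda>d. lip (frechet_derivative F (at p) d) c)) (at p)"
proof -
  have "((\<lambda>x. lip (F x) c) has_derivative (\<lambda>h. lip (F p) 0 + lip (frechet_derivative F (at p) h) c)) (at p)"
    by (rule bounded_bilinear.FDERIV[OF lip_bilinear fd[OF assms] has_derivative_const])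
  moreover have "(\<lambda>h. lip (F p) 0 + lip (frechet_derivative F (at p) h) c) = (\<lambda>d. lip (frechet_derivative F (at p) d) c)"
    by (simp add: lip_def)
  ultimately show ?thesis by simp
qed

lemma lip_cont: "continuous_on UNIV F \<Longrightarrow> continuous_on UNIV (\<lambda>x. lip (F x) c)"
  by (rule bounded_bilinear.continuous_on[OF lip_bilinear]) (auto intro: continuous_on_const)

lemma symm2:
  assumes "smooth S"
  shows "lip (pd_v (pd_u S) q) c = lip (pd_u (pd_v S) q) c"
proof -
  note sf = smooth_facts[OF assms]
  have eu: "pd_u S = (\<lambda>x. frechet_derivative S (at x) (axis 1 1))" by (simp add: fun_eq_iff pd_u_def)
  have ev: "pd_v S = (\<lambda>x. frechet_derivative S (at x) (axis 2 1))" by (simp add: fun_eq_iff pd_v_def)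
  have du: "pd_u S differentiable at p" for p using sf(2) eu by simp
  have dv: "pd_v S differentiable at p" for p using sf(2) ev by simp
  show ?thesis
  proof (rule schwarz[where g="\<lambda>p. lip (S p) c" and G="\<lambda>p d. lip (frechet_derivative S (at p) d) c"
        and gu="\<lambda>p. lip (pd_u S p) c" and gv="\<lambda>p. lip (pd_v S p) c"
        and GU="\<lambda>p d. lip (frechet_derivative (pd_u S) (at p) d) c"
        and GV="\<lambda>p d. lip (frechet_derivative (pd_v S) (at p) d) c"])
    show "((\<lambda>p. lip (S p) c) has_derivative (\<lambda>d. lip (frechet_derivative S (at p) d) c)) (at p)" for p
      by (rule lip_const_deriv[OF sf(1)])
    show "((\<lambda>p. lip (pd_u S p) c) has_derivative (\<lambda>d. lip (frechet_derivative (pd_u S) (at p) d) c)) (at p)" for p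
      by (rule lip_const_deriv[OF du])
    show "((\<lambda>p. lip (pd_v S p) c) has_derivative (\<lambda>d. lip (frechet_derivative (pd_v S) (at p) d) c)) (at p)" for p
      by (rule lip_const_deriv[OF dv])
    show "continuous_on UNIV (\<lambda>p. lip (pd_v (pd_u S) p) c)"
      by (rule lip_cont) (simp add: pd_v_def[abs_def] eu sf(3))
    show "continuous_on UNIV (\<lambda>p. lip (pd_u (pd_v S) p) c)"
      by (rule lip_cont) (simp add: pd_u_def[abs_def] ev sf(3))
  qed (simp_all add: pd_u_def[abs_def] pd_v_def[abs_def])
qed

lemma coord_unique:
  assumes np: "\<not> vparallel (A::'a::real_vector) B" and eq: "x1 *\<^sub>R A + x2 *\<^sub>R B = y1 *\<^sub>R A + y2 *\<^sub>R B"
  shows "x1 = y1 \<and> x2 = y2"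
proof -
  have e: "(x1 - y1) *\<^sub>R A = (y2 - x2) *\<^sub>R B" using eq by (simp add: algebra_simps)
  have B0: "B \<noteq> 0" using np unfolding vparallel_def by (metis scale_zero_left)
  show ?thesis
  proof (cases "x1 = y1")
    case True
    with e B0 show ?thesis by simp
  next
    case False
    have "A = inverse (x1 - y1) *\<^sub>R ((x1 - y1) *\<^sub>R A)" using False by simp
    also have "\<dots> = (inverse (x1 - y1) * (y2 - x2)) *\<^sub>R B" using e by simp
    finally have "A = (inverse (x1 - y1) * (y2 - x2)) *\<^sub>R B" .
    then show ?thesis using np unfolding vparallel_def by blast
  qed
qed

lemma tcoords_eq:
  assumes "\<not> vparallel (pd_u S p) (pd_v S p)"
  shows "tcoords S p (a1 *\<^sub>R pd_u S p + a2 *\<^sub>R pd_v S p) = (a1, a2)"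
  unfolding tcoords_def
proof (rule the_equality)
  show "case (a1, a2) of (x1, x2) \<Rightarrow> a1 *\<^sub>R pd_u S p + a2 *\<^sub>R pd_v S p = x1 *\<^sub>R pd_u S p + x2 *\<^sub>R pd_v S p"
    by simp
next
  fix z assume "case z of (x1, x2) \<Rightarrow> a1 *\<^sub>R pd_u S p + a2 *\<^sub>R pd_v S p = x1 *\<^sub>R pd_u S p + x2 *\<^sub>R pd_v S p"
  moreover obtain z1 z2 where z: "z = (z1, z2)" by (cases z)
  ultimately have "z1 *\<^sub>R pd_u S p + z2 *\<^sub>R pd_v S p = a1 *\<^sub>R pd_u S p + a2 *\<^sub>R pd_v S p" by simp
  from coord_unique[OF assms this] show "z = (a1, a2)" using z by simp
qed

lemma II_coords:
  assumes "\<not> vparallel (pd_u S p) (pd_v S p)"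
  shows "II S N p (b1 *\<^sub>R pd_u S p + b2 *\<^sub>R pd_v S p) (a1 *\<^sub>R pd_u S p + a2 *\<^sub>R pd_v S p) =
    lip (pd_u (pd_u S) p) (N p) * b1 * a1 + lip (pd_v (pd_u S) p) (N p) * (b1 * a2 + b2 * a1)
    + lip (pd_v (pd_v S) p) (N p) * b2 * a2"
  by (simp add: II_def tcoords_eq[OF assms])

theorem proposition1:
  fixes S :: "real^2 \<Rightarrow> real^4" and n :: "real^2 \<Rightarrow> real^3" and h :: "real^2 \<Rightarrow> real"
    and N :: "real^2 \<Rightarrow> real^4" and \<gamma> :: "real \<Rightarrow> real^2" and t :: real and T :: "real^4"
  assumes net: "regular_net S"
    and cong: "tangent_iso_congruence S n h"
    and N_smooth: "smooth N"
    and N_normal: "\<forall>p. normal_to (N p) (iso_hyp (n p) (h p))"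
    and gamma_smooth: "smooth \<gamma>"
    and C_regular: "\<forall>s\<in>{0..1}. vector_derivative (S \<circ> \<gamma>) (at s) \<noteq> 0"
    and family_regular: "\<forall>s\<in>{0..1}.
          \<not> vparallel (vector_derivative (N \<circ> \<gamma>) (at s)) ((N \<circ> \<gamma>) s)"
    and t_in: "t \<in> {0..1}"
    and T_tangent: "T \<in> span {pd_u S (\<gamma> t), pd_v S (\<gamma> t)}"
    and T_nonzero: "T \<noteq> 0"
    and T_in_char: "\<forall>s::real. (S \<circ> \<gamma>) t + s *\<^sub>R T \<in> char_plane (S \<circ> \<gamma>) (N \<circ> \<gamma>) t"
  shows "L_conjugate S N (\<gamma> t) T (vector_derivative (S \<circ> \<gamma>) (at t))"
proof -
  define p0 where "p0 = \<gamma> t"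
  define g' where "g' = vector_derivative \<gamma> (at t)"
  define a1 where "a1 = g' $ 1"
  define a2 where "a2 = g' $ 2"
  define Su where "Su = pd_u S p0"
  define Sv where "Sv = pd_v S p0"
  define Nu where "Nu = pd_u N p0"
  define Nv where "Nv = pd_v N p0"
  define N0 where "N0 = N p0"
  have Ssm: "smooth S" using net by (simp add: regular_net_def)
  have np: "\<not> vparallel Su Sv" using net by (simp add: regular_net_def Su_def Sv_def)
  note sS = smooth_facts[OF Ssm]
  note sN = smooth_facts[OF N_smooth]
  note sg = smooth_facts[OF gamma_smooth]
  have eu: "pd_u S = (\<lambda>x. frechet_derivative S (at x) (axis 1 1))" by (simp add: fun_eq_iff pd_u_def)
  have ev: "pd_v S = (\<lambda>x. frechet_derivative S (at x) (axis 2 1))" by (simp add: fun_eq_iff pd_v_def)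
  have du: "pd_u S differentiable at p" for p using sS(2) eu by simp
  have dv: "pd_v S differentiable at p" for p using sS(2) ev by simp
  have tan_u: "lip (pd_u S p) (N p) = 0" for p
  proof -
    have c: "norm (n p) = 1 \<and> S p \<in> iso_hyp (n p) (h p) \<and> parallel_to (pd_u S p) (iso_hyp (n p) (h p))"
      using cong by (simp add: tangent_iso_congruence_def)
    then have "S p + pd_u S p \<in> iso_hyp (n p) (h p)" by (simp add: parallel_to_def)
    with c N_normal have "lip ((S p + pd_u S p) - S p) (N p) = 0" unfolding normal_to_def by blast
    then show ?thesis by simp
  qed
  have tan_v: "lip (pd_v S p) (N p) = 0" for p
  proof -
    have c: "norm (n p) = 1 \<and> S p \<in> iso_hyp (n p) (h p) \<and> parallel_to (pd_v S p) (iso_hyp (n p) (h p))"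
      using cong by (simp add: tangent_iso_congruence_def)
    then have "S p + pd_v S p \<in> iso_hyp (n p) (h p)" by (simp add: parallel_to_def)
    with c N_normal have "lip ((S p + pd_v S p) - S p) (N p) = 0" unfolding normal_to_def by blast
    then show ?thesis by simp
  qed
  have i1: "lip Su Nu + lip (pd_u (pd_u S) p0) N0 = 0"
    using diff_lip_zero[OF du sN(1) tan_u, of p0 "axis 1 1"]
    by (simp only: Su_def Nu_def N0_def pd_u_def[of "pd_u S"] pd_u_def[of N])
  have i2: "lip Su Nv + lip (pd_v (pd_u S) p0) N0 = 0"
    using diff_lip_zero[OF du sN(1) tan_u, of p0 "axis 2 1"]
    by (simp only: Su_def Nv_def N0_def pd_v_def[of "pd_u S"] pd_v_def[of N])
  have i3: "lip Sv Nu + lip (pd_u (pd_v S) p0) N0 = 0"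
    using diff_lip_zero[OF dv sN(1) tan_v, of p0 "axis 1 1"]
    by (simp only: Sv_def Nu_def N0_def pd_u_def[of "pd_v S"] pd_u_def[of N])
  have i4: "lip Sv Nv + lip (pd_v (pd_v S) p0) N0 = 0"
    using diff_lip_zero[OF dv sN(1) tan_v, of p0 "axis 2 1"]
    by (simp only: Sv_def Nv_def N0_def pd_v_def[of "pd_v S"] pd_v_def[of N])
  have sym: "lip (pd_v (pd_u S) p0) N0 = lip (pd_u (pd_v S) p0) N0" by (rule symm2[OF Ssm])
  have lin: "frechet_derivative F (at p0) g' = a1 *\<^sub>R pd_u F p0 + a2 *\<^sub>R pd_v F p0"
    if "F differentiable at p0" for F :: "real^2 \<Rightarrow> real^4"
  proof -
    have L: "linear (frechet_derivative F (at p0))" using linear_frechet_derivative[OF that] .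
    have "frechet_derivative F (at p0) g' = frechet_derivative F (at p0) (a1 *\<^sub>R axis 1 1 + a2 *\<^sub>R axis 2 1)"
      using vec2_decomp[of g'] by (simp add: a1_def a2_def)
    also have "\<dots> = a1 *\<^sub>R pd_u F p0 + a2 *\<^sub>R pd_v F p0"
      by (simp add: linear_add[OF L] linear_cmul[OF L] pd_u_def pd_v_def)
    finally show ?thesis .
  qed
  have Cd: "vector_derivative (S \<circ> \<gamma>) (at t) = a1 *\<^sub>R Su + a2 *\<^sub>R Sv"
    using chain_vd[OF sg(1) fd[OF sS(1)]] lin[OF sS(1)]
    by (simp add: p0_def g'_def Su_def Sv_def)
  have Nd: "vector_derivative (N \<circ> \<gamma>) (at t) = a1 *\<^sub>R Nu + a2 *\<^sub>R Nv"
    using chain_vd[OF sg(1) fd[OF sN(1)]] lin[OF sN(1)]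
    by (simp add: p0_def g'_def Nu_def Nv_def)
  obtain b1 b2 where Tb: "T = b1 *\<^sub>R Su + b2 *\<^sub>R Sv"
    using span2[OF T_tangent] unfolding Su_def Sv_def p0_def by blast
  have "(S \<circ> \<gamma>) t + 1 *\<^sub>R T \<in> char_plane (S \<circ> \<gamma>) (N \<circ> \<gamma>) t" using T_in_char by blast
  then have "lip T (vector_derivative (N \<circ> \<gamma>) (at t)) - lip (vector_derivative (S \<circ> \<gamma>) (at t)) N0 = 0"
    by (simp add: char_plane_def N0_def p0_def)
  then have key0: "lip (b1 *\<^sub>R Su + b2 *\<^sub>R Sv) (a1 *\<^sub>R Nu + a2 *\<^sub>R Nv) - lip (a1 *\<^sub>R Su + a2 *\<^sub>R Sv) N0 = 0"
    using Tb Cd Nd by simp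
  have t0: "lip Su N0 = 0" "lip Sv N0 = 0" using tan_u tan_v by (simp_all add: Su_def Sv_def N0_def)
  define LL where "LL = lip (pd_u (pd_u S) p0) N0"
  define MM where "MM = lip (pd_v (pd_u S) p0) N0"
  define NN where "NN = lip (pd_v (pd_v S) p0) N0"
  have E: "II S N p0 (x1 *\<^sub>R Su + x2 *\<^sub>R Sv) (y1 *\<^sub>R Su + y2 *\<^sub>R Sv) = LL * x1 * y1 + MM * (x1 * y2 + x2 * y1) + NN * x2 * y2"
    for x1 x2 y1 y2
    using II_coords[of S p0 N x1 x2 y1 y2] np by (simp add: Su_def Sv_def LL_def MM_def NN_def N0_def)
  have key: "LL * b1 * a1 + MM * (b1 * a2 + b2 * a1) + NN * b2 * a2 = 0"
  proof -
    have "lip Su Nu = - LL" "lip Su Nv = - MM" "lip Sv Nu = - MM" "lip Sv Nv = - NN"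
      using i1 i2 i3 i4 sym by (simp_all add: LL_def MM_def NN_def)
    with key0 t0 show ?thesis
      by (simp add: lip_add_left lip_add_right lip_scale_left lip_scale_right algebra_simps)
  qed
  have Cne: "a1 *\<^sub>R Su + a2 *\<^sub>R Sv \<noteq> 0" using C_regular t_in Cd by auto
  show ?thesis
  proof (cases "vparallel T (vector_derivative (S \<circ> \<gamma>) (at t))")
    case False
    then show ?thesis using key E Tb Cd by (simp add: L_conjugate_def p0_def[symmetric])
  next
    case True
    then obtain c where "T = c *\<^sub>R (a1 *\<^sub>R Su + a2 *\<^sub>R Sv) \<or> a1 *\<^sub>R Su + a2 *\<^sub>R Sv = c *\<^sub>R T"
      unfolding vparallel_def Cd by blast
    then have "II S N p0 T T = 0"
    proof
      assume Tc: "T = c *\<^sub>R (a1 *\<^sub>R Su + a2 *\<^sub>R Sv)"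
      then have "b1 *\<^sub>R Su + b2 *\<^sub>R Sv = (c * a1) *\<^sub>R Su + (c * a2) *\<^sub>R Sv" using Tb by (simp add: algebra_simps)
      from coord_unique[OF np this] have b: "b1 = c * a1" "b2 = c * a2" by auto
      have "II S N p0 T T = LL * b1 * b1 + MM * (b1 * b2 + b2 * b1) + NN * b2 * b2" using E Tb by simp
      also have "\<dots> = c * (LL * b1 * a1 + MM * (b1 * a2 + b2 * a1) + NN * b2 * a2)"
        unfolding b by (simp add: algebra_simps)
      finally show ?thesis using key by simp
    next
      assume Cc: "a1 *\<^sub>R Su + a2 *\<^sub>R Sv = c *\<^sub>R T"
      then have "a1 *\<^sub>R Su + a2 *\<^sub>R Sv = (c * b1) *\<^sub>R Su + (c * b2) *\<^sub>R Sv" using Tb by (simp add: algebra_simps)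
      from coord_unique[OF np this] have a: "a1 = c * b1" "a2 = c * b2" by auto
      have c0: "c \<noteq> 0" using Cne Cc by auto
      have "0 = LL * b1 * a1 + MM * (b1 * a2 + b2 * a1) + NN * b2 * a2" using key by simp
      also have "\<dots> = c * (LL * b1 * b1 + MM * (b1 * b2 + b2 * b1) + NN * b2 * b2)"
        unfolding a by (simp add: algebra_simps)
      finally have "LL * b1 * b1 + MM * (b1 * b2 + b2 * b1) + NN * b2 * b2 = 0" using c0 by simp
      then show ?thesis using E Tb by simp
    qed
    then show ?thesis using True by (simp add: L_conjugate_def p0_def[symmetric])
  qed
qed

end
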